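(* Given a network $f$ and an input $\mathbf{x} = \langle x_1, \ldots, x_m \rangle$ where $m \geq 2$, the time complexity of $\textsc{binarySequential}(f, \mathbf{x})$ is $2$ calls of $\textsc{checkValid}$ for the best case (all features are irrelevant) and $k_{2m} = 2 \cdot k_m + 1$ or $k_{2m+1} = k_{m+1} + k_m + 1$ calls of $\textsc{checkValid}$ for the worst case (all features are in explanation). When $m = 1$, it needs $1$ $\textsc{checkValid}$ call.
   Context: $f$ is a neural network (classifier or regressor), $\mathbf{x}$ an input with $m$ features, $\epsilon$ a perturbation magnitude and $p$ a norm. The oracle $\textsc{checkValid}(f, \mathbf{x}, \mathbf{x}_S)$ returns True iff every input obtained from $\mathbf{x}$ by perturbing the features in $\mathbf{x}_S$ within $\epsilon$ (in $p$-norm) while keeping all other features fixed yields the same prediction as $\mathbf{x}$ (same class, or output within $\delta$ for regression); features whose perturbation preserves the prediction are called irrelevant, the others form the explanation. The procedure $\textsc{binarySequential}$ maintains global sets $\mathbf{x}_\mathbf{A}$ (explanation) and $\mathbf{x}_\mathbf{B}$ (irrelevant), both initialized to $\emptyset$, and on candidate features $\mathbf{x}_\Theta$ does: if $|\mathbf{x}_\Theta|=1$, call $\textsc{checkValid}(f,\mathbf{x},\mathbf{x}_\mathbf{B}\cup\mathbf{x}_\Theta)$ and add $\mathbf{x}_\Theta$ to $\mathbf{x}_\mathbf{B}$ if True, else to $\mathbf{x}_\mathbf{A}$. Otherwise split $\mathbf{x}_\Theta$ into two consecutive halves $\mathbf{x}_\Phi,\mathbf{x}_\Psi$ (with $|\mathbf{x}_\Phi|=|\mathbf{x}_\Psi|+1$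 when $|\mathbf{x}_\Theta|$ is odd). If $\textsc{checkValid}(f,\mathbf{x},\mathbf{x}_\mathbf{B}\cup\mathbf{x}_\Phi)$ is True: add $\mathbf{x}_\Phi$ to $\mathbf{x}_\mathbf{B}$; then if $\textsc{checkValid}(f,\mathbf{x},\mathbf{x}_\mathbf{B}\cup\mathbf{x}_\Psi)$ is True add $\mathbf{x}_\Psi$ to $\mathbf{x}_\mathbf{B}$, else if $|\mathbf{x}_\Psi|=1$ add it to $\mathbf{x}_\mathbf{A}$, else recurse on $\mathbf{x}_\Psi$. If instead the check on $\mathbf{x}_\Phi$ is False: if $|\mathbf{x}_\Phi|=1$ add it to $\mathbf{x}_\mathbf{A}$, else recurse on $\mathbf{x}_\Phi$; then recurse on $\mathbf{x}_\Psi$. Here $k_m$ denotes the number of $\textsc{checkValid}$ calls in the worst case for an input of $m$ features. *)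

theory Defs
  imports Main
begin

text \<open>Features of the input x = <x_1,...,x_m> are identified with the indices 0..<m.
  Since f, x, epsilon, p (and delta) are fixed, the oracle checkValid(f, x, -) is modelled
  as a black-box predicate cv on sets of feature indices: cv S holds iff perturbing the
  features in S (keeping the others fixed) preserves the prediction.

  bsq cv Theta A B  runs binarySequential on the candidate list Theta with current global
  sets A (explanation) and B (irrelevant) and returns (A', B', number of checkValid calls).\<close>

function bsq :: "(nat set \<Rightarrow> bool) \<Rightarrow> nat list \<Rightarrow> nat set \<Rightarrow> nat set
                   \<Rightarrow> nat set \<times> nat set \<times> nat" where
  "bsq cv th A B =
    (if th = [] then (A, B, 0)
     else if length th = 1 then
       (if cv (B \<union> set th) then (A, B \<union> set th, 1) else (A \<union> set th, B, 1))
     else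
       (let h = (length th + 1) div 2; phi = take h th; psi = drop h th in
        if cv (B \<union> set phi) then
          (let B' = B \<union> set phi in
           if cv (B' \<union> set psi) then (A, B' \<union> set psi, 2)
           else if length psi = 1 then (A \<union> set psi, B', 2)
           else (case bsq cv psi A B' of (A2, B2, c) \<Rightarrow> (A2, B2, c + 2)))
        else
          (case (if length phi = 1 then (A \<union> set phi, B, 0) else bsq cv phi A B) of
             (A1, B1, c1) \<Rightarrow>
               (case bsq cv psi A1 B1 of (A2, B2, c2) \<Rightarrow> (A2, B2, c1 + c2 + 1)))))"
  by pat_completeness auto
termination
  apply (relation "measure (\<lambda>(cv, th, A, B). length th)")
     apply auto
  subgoal for cv th B
  proof -
    assume "th \<noteq> []" "length th \<noteq> Suc 0"
    hence "length th \<ge> 2" by (cases th) (auto simp: Suc_le_eq)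
    thus ?thesis by linarith
  qed
  done

definition binarySequential :: "(nat set \<Rightarrow> bool) \<Rightarrow> nat \<Rightarrow> nat set \<times> nat set \<times> nat" where
  "binarySequential cv m = bsq cv [0..<m] {} {}"

definition calls :: "(nat set \<Rightarrow> bool) \<Rightarrow> nat \<Rightarrow> nat" where
  "calls cv m = snd (snd (binarySequential cv m))"

definition k :: "nat \<Rightarrow> nat" where
  "k m = Max (range (\<lambda>cv. calls cv m))"

text \<open>Oracles arising from checkValid are downward closed: perturbing fewer features
  allows fewer perturbed inputs.\<close>
definition downward_closed :: "(nat set \<Rightarrow> bool) \<Rightarrow> bool" where
  "downward_closed cv \<longleftrightarrow> (\<forall>S T. cv T \<and> S \<subseteq> T \<longrightarrow> cv S)"

end

theory Submission
  imports Defs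
begin

declare bsq.simps [simp del]

function W :: "nat \<Rightarrow> nat" where
  "W n = (if n = 0 then 0 else if n = 1 then 1 else
     (if (n+1) div 2 = 1 then 0 else W ((n+1) div 2)) + W (n - (n+1) div 2) + 1)"
  by pat_completeness auto
termination
  by (relation "measure id") auto

declare W.simps [simp del]

lemma W0: "W 0 = 0" by (subst W.simps) simp
lemma W1: "W (Suc 0) = 1" by (subst W.simps) simp

lemma W_step: "n \<ge> 2 \<Longrightarrow> W n = (if (n+1) div 2 = 1 then 0 else W ((n+1) div 2)) + W (n - (n+1) div 2) + 1"
  by (subst W.simps) auto

lemma W_pos: "n \<ge> 1 \<Longrightarrow> W n \<ge> 1"
proof (cases "n = 1")
  case True then show ?thesis by (simp add: W1)
next
  case False
  assume "n \<ge> 1"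
  with False have "n \<ge> 2" by simp
  then show ?thesis using W_step[of n] by simp
qed

lemma bsq_unfold:
  assumes "length th \<ge> 2"
  shows "bsq cv th A B =
       (let h = (length th + 1) div 2; phi = take h th; psi = drop h th in
        if cv (B \<union> set phi) then
          (let B' = B \<union> set phi in
           if cv (B' \<union> set psi) then (A, B' \<union> set psi, 2)
           else if length psi = 1 then (A \<union> set psi, B', 2)
           else (case bsq cv psi A B' of (A2, B2, c) \<Rightarrow> (A2, B2, c + 2)))
        else
          (case (if length phi = 1 then (A \<union> set phi, B, 0) else bsq cv phi A B) of
             (A1, B1, c1) \<Rightarrow>
               (case bsq cv psi A1 B1 of (A2, B2, c2) \<Rightarrow> (A2, B2, c1 + c2 + 1))))"
  using assms by (subst bsq.simps) auto

lemma bsq_cases: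
  assumes l: "length th \<ge> 2" and E: "bsq cv th A B = (A', B', c)"
  shows "c = 2 \<or> (\<exists>A0 B0 A2 B2 c0. bsq cv (drop ((length th + 1) div 2) th) A0 B0 = (A2, B2, c0) \<and> c = c0 + 2)
     \<or> (\<exists>c1 A0 B0 A2 B2 c2. bsq cv (drop ((length th + 1) div 2) th) A0 B0 = (A2, B2, c2) \<and> c = c1 + c2 + 1)"
proof -
  define h where "h = (length th + 1) div 2"
  define phi where "phi = take h th"
  define psi where "psi = drop h th"
  have U: "bsq cv th A B =
       (if cv (B \<union> set phi) then
           (if cv ((B \<union> set phi) \<union> set psi) then (A, (B \<union> set phi) \<union> set psi, 2)
           else if length psi = 1 then (A \<union> set psi, B \<union> set phi, 2)
           else (case bsq cv psi A (B \<union> set phi) of (A2, B2, c) \<Rightarrow> (A2, B2, c + 2)))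
        else
          (case (if length phi = 1 then (A \<union> set phi, B, 0) else bsq cv phi A B) of
             (A1, B1, c1) \<Rightarrow>
               (case bsq cv psi A1 B1 of (A2, B2, c2) \<Rightarrow> (A2, B2, c1 + c2 + 1))))"
    using bsq_unfold[OF l, of cv A B] unfolding Let_def phi_def psi_def h_def by simp
  show ?thesis
  proof (cases "cv (B \<union> set phi)")
    case T: True
    show ?thesis
    proof (cases "cv ((B \<union> set phi) \<union> set psi) \<or> length psi = 1")
      case True
      then have "c = 2" using E U T by (auto split: if_splits)
      then show ?thesis by simp
    next
      case False
      obtain A2 B2 c0 where E2: "bsq cv psi A (B \<union> set phi) = (A2, B2, c0)" by (metis prod_cases3)
      have "c = c0 + 2" using E U T False E2 by auto
      then show ?thesis using E2 unfolding psi_def h_def by blast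
    qed
  next
    case F: False
    obtain A1 B1 c1 where E1: "(if length phi = 1 then (A \<union> set phi, B, 0) else bsq cv phi A B) = (A1, B1, c1)"
      by (metis prod_cases3)
    obtain A2 B2 c2 where E2: "bsq cv psi A1 B1 = (A2, B2, c2)" by (metis prod_cases3)
    have "c = c1 + c2 + 1" using E U F E1 E2 by simp
    then show ?thesis using E2 unfolding psi_def h_def by blast
  qed
qed

lemma bsq_pos: "th \<noteq> [] \<Longrightarrow> snd (snd (bsq cv th A B)) \<ge> 1"
proof -
  assume ne: "th \<noteq> []"
  obtain A' B' c where E: "bsq cv th A B = (A', B', c)" by (metis prod_cases3)
  have "c \<ge> 1"
  proof (cases "length th = 1")
    case True then show ?thesis using E by (subst (asm) bsq.simps) (auto split: if_splits)
  next
    case False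
    have "length th \<noteq> 0" using ne by simp
    with False have "length th \<ge> 2" by linarith
    from bsq_cases[OF this E] show ?thesis by auto
  qed
  then show ?thesis using E by simp
qed

lemma bsq_ge2: "length th \<ge> 2 \<Longrightarrow> snd (snd (bsq cv th A B)) \<ge> 2"
proof -
  assume l: "length th \<ge> 2"
  obtain A' B' c where E: "bsq cv th A B = (A', B', c)" by (metis prod_cases3)
  have ne: "drop ((length th + 1) div 2) th \<noteq> []" using l by simp
  have P: "\<And>A B A2 B2 c2. bsq cv (drop ((length th + 1) div 2) th) A B = (A2, B2, c2) \<Longrightarrow> c2 \<ge> 1"
    using bsq_pos[OF ne] by (metis snd_conv)
  have "c \<ge> 2" using bsq_cases[OF l E] P by fastforce
  then show ?thesis using E by simp
qed

lemma bsq_ub: "bsq cv th A B = (A', B', c) \<Longrightarrow> c \<le> W (length th)"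
proof (induction "length th" arbitrary: th A B A' B' c rule: less_induct)
  case less
  have "length th = 0 \<or> length th = 1 \<or> length th \<ge> 2" by linarith
  then consider "th = []" | "length th = 1" | "length th \<ge> 2" by auto
  then show ?case
  proof cases
    case 1 then show ?thesis using less.prems by (subst (asm) bsq.simps) auto
  next
    case 2
    have "c = 1" using less.prems 2 by (subst (asm) bsq.simps) (auto split: if_splits)
    then show ?thesis using 2 W1 by simp
  next
    case 3
    define n where "n = length th"
    define h where "h = (n + 1) div 2"
    have hn: "h < n" "n - h < n" "h \<ge> 1" "n - h \<ge> 1" using 3 unfolding h_def n_def by auto
    have lp: "length (take h th) = h" "length (drop h th) = n - h" using hn unfolding n_def by auto
    have IH1: "\<And>A B A' B' c. bsq cv (take h th) A B = (A', B', c) \<Longrightarrow> c \<le> W h"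
      using less.hyps[of "take h th"] lp hn unfolding n_def by auto
    have IH2: "\<And>A B A' B' c. bsq cv (drop h th) A B = (A', B', c) \<Longrightarrow> c \<le> W (n - h)"
      using less.hyps[of "drop h th"] lp hn unfolding n_def by auto
    have Wn: "W n = (if h = 1 then 0 else W h) + W (n - h) + 1"
      using W_step[of n] 3 unfolding h_def n_def by simp
    have Wp: "W (n - h) \<ge> 1" using W_pos hn by simp
    have Wh: "n - h \<noteq> 1 \<Longrightarrow> W h \<ge> 1 \<and> h \<noteq> 1" using W_pos hn unfolding h_def by auto
    define phi where "phi = take h th"
    define psi where "psi = drop h th"
    have U: "bsq cv th A B =
       (if cv (B \<union> set phi) then
           (if cv ((B \<union> set phi) \<union> set psi) then (A, (B \<union> set phi) \<union> set psi, 2)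
           else if length psi = 1 then (A \<union> set psi, B \<union> set phi, 2)
           else (case bsq cv psi A (B \<union> set phi) of (A2, B2, c) \<Rightarrow> (A2, B2, c + 2)))
        else
          (case (if length phi = 1 then (A \<union> set phi, B, 0) else bsq cv phi A B) of
             (A1, B1, c1) \<Rightarrow>
               (case bsq cv psi A1 B1 of (A2, B2, c2) \<Rightarrow> (A2, B2, c1 + c2 + 1))))"
      using bsq_unfold[OF 3, of cv A B] unfolding Let_def phi_def psi_def h_def n_def by simp
    show ?thesis
    proof (cases "cv (B \<union> set phi)")
      case T: True
      show ?thesis
      proof (cases "cv ((B \<union> set phi) \<union> set psi) \<or> length psi = 1")
        case True
        then have "c = 2" using less.prems U T by (auto split: if_splits)
        then show ?thesis using Wn Wp n_def by simp
      next
        case False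
        obtain A2 B2 c0 where E: "bsq cv psi A (B \<union> set phi) = (A2, B2, c0)" by (metis prod_cases3)
        have "c = c0 + 2" using less.prems U T False E by auto
        moreover have "c0 \<le> W (n - h)" using IH2 E psi_def by blast
        moreover have "n - h \<noteq> 1" using False lp psi_def by simp
        ultimately show ?thesis using Wn Wh n_def by simp
      qed
    next
      case F: False
      show ?thesis
      proof (cases "h = 1")
        case True
        obtain A2 B2 c2 where E: "bsq cv psi (A \<union> set phi) B = (A2, B2, c2)" by (metis prod_cases3)
        have "c = c2 + 1" using less.prems U F True E lp phi_def by auto
        moreover have "c2 \<le> W (n - h)" using IH2 E psi_def by blast
        ultimately show ?thesis using Wn True n_def by simp
      next
        case False
        obtain A1 B1 c1 where E1: "bsq cv phi A B = (A1, B1, c1)" by (metis prod_cases3)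
        obtain A2 B2 c2 where E2: "bsq cv psi A1 B1 = (A2, B2, c2)" by (metis prod_cases3)
        have "c = c1 + c2 + 1" using less.prems U F False E1 E2 lp phi_def by auto
        moreover have "c1 \<le> W h" using IH1 E1 phi_def by blast
        moreover have "c2 \<le> W (n - h)" using IH2 E2 psi_def by blast
        ultimately show ?thesis using Wn False n_def by simp
      qed
    qed
  qed
qed


lemma bsq_false:
  assumes hyp: "\<And>S. S \<noteq> {} \<Longrightarrow> S \<subseteq> U \<Longrightarrow> \<not> cv S"
  shows "set th \<subseteq> U \<Longrightarrow> B \<subseteq> U \<Longrightarrow> bsq cv th A B = (A \<union> set th, B, W (length th))"
proof (induction "length th" arbitrary: th A B rule: less_induct)
  case less
  have "length th = 0 \<or> length th = 1 \<or> length th \<ge> 2" by linarith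
  then consider "th = []" | "length th = 1" | "length th \<ge> 2" by auto
  then show ?case
  proof cases
    case 1 then show ?thesis by (subst bsq.simps) (auto simp: W0 W1)
  next
    case 2
    have "th \<noteq> []" using 2 by auto
    then have "B \<union> set th \<noteq> {}" by simp
    moreover have "B \<union> set th \<subseteq> U" using less.prems by simp
    ultimately have "\<not> cv (B \<union> set th)" using hyp[of "B \<union> set th"] by simp
    then show ?thesis using 2 by (subst bsq.simps) (auto simp: W0 W1)
  next
    case 3
    define n where "n = length th"
    define h where "h = (n + 1) div 2"
    have hn: "h < n" "n - h < n" "h \<ge> 1" "n - h \<ge> 1" using 3 unfolding h_def n_def by auto
    define phi where "phi = take h th"
    define psi where "psi = drop h th"
    have lp: "length phi = h" "length psi = n - h" using hn unfolding n_def phi_def psi_def by auto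
    have sp: "set phi \<subseteq> U" "set psi \<subseteq> U" using less.prems unfolding phi_def psi_def
      by (auto dest: in_set_takeD in_set_dropD)
    have st: "set phi \<union> set psi = set th" unfolding phi_def psi_def
      by (metis append_take_drop_id set_append)
    have IH1: "\<And>A B. B \<subseteq> U \<Longrightarrow> bsq cv phi A B = (A \<union> set phi, B, W h)"
      using less.hyps[of phi] lp hn sp unfolding n_def by auto
    have IH2: "\<And>A B. B \<subseteq> U \<Longrightarrow> bsq cv psi A B = (A \<union> set psi, B, W (n - h))"
      using less.hyps[of psi] lp hn sp unfolding n_def by auto
    have Wn: "W n = (if h = 1 then 0 else W h) + W (n - h) + 1"
      using W_step[of n] 3 unfolding h_def n_def by simp
    have nc: "\<not> cv (B \<union> set phi)"
    proof -
      have "phi \<noteq> []" using lp hn by auto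
      then have "B \<union> set phi \<noteq> {}" by simp
      moreover have "B \<union> set phi \<subseteq> U" using sp less.prems by simp
      ultimately show ?thesis using hyp[of "B \<union> set phi"] by simp
    qed
    have U: "bsq cv th A B =
          (case (if length phi = 1 then (A \<union> set phi, B, 0) else bsq cv phi A B) of
             (A1, B1, c1) \<Rightarrow>
               (case bsq cv psi A1 B1 of (A2, B2, c2) \<Rightarrow> (A2, B2, c1 + c2 + 1)))"
      using bsq_unfold[OF 3, of cv A B] nc unfolding Let_def phi_def psi_def h_def n_def by simp
    show ?thesis
    proof (cases "h = 1")
      case True
      then show ?thesis using U IH2[of B "A \<union> set phi"] less.prems lp Wn st n_def
        by (simp add: Un_assoc)
    next
      case False
      then show ?thesis using U IH1[of B A] IH2[of B "A \<union> set phi"] less.prems lp Wn st n_def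
        by (simp add: Un_assoc)
    qed
  qed
qed

lemma calls_ub: "calls cv m \<le> W m"
proof -
  obtain A' B' c where E: "bsq cv [0..<m] {} {} = (A', B', c)" by (metis prod_cases3)
  then have "c \<le> W (length [0..<m])" by (rule bsq_ub)
  then show ?thesis using E by (simp add: calls_def binarySequential_def)
qed

lemma calls_false: "calls (\<lambda>_. False) m = W m"
proof -
  have "bsq (\<lambda>_. False) [0..<m] {} {} = ({} \<union> set [0..<m], {}, W (length [0..<m]))"
    by (rule bsq_false[of UNIV]) auto
  then show ?thesis by (simp add: calls_def binarySequential_def)
qed

lemma k_W: "k m = W m"
  unfolding k_def
proof (rule Max_eqI)
  show "finite (range (\<lambda>cv. calls cv m))"
    by (rule finite_subset[of _ "{..W m}"]) (auto simp: calls_ub)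
  show "\<And>y. y \<in> range (\<lambda>cv. calls cv m) \<Longrightarrow> y \<le> W m" using calls_ub by auto
  show "W m \<in> range (\<lambda>cv. calls cv m)" by (rule range_eqI[of _ _ "\<lambda>_. False"]) (simp add: calls_false)
qed

theorem theorem1:
  shows
  "(\<forall>m\<ge>2. \<forall>cv. downward_closed cv \<longrightarrow>
      cv {..<m} \<longrightarrow> calls cv m = 2)
   \<and> (\<forall>m\<ge>2. \<forall>cv. 2 \<le> calls cv m)
   \<and> (\<forall>m\<ge>2. \<forall>cv. downward_closed cv \<longrightarrow> (\<forall>i<m. \<not> cv {i}) \<longrightarrow> calls cv m = k m)
   \<and> (\<forall>m\<ge>2. k (2 * m) = 2 * k m + 1 \<and> k (2 * m + 1) = k (m + 1) + k m + 1)
   \<and> (\<forall>cv. calls cv 1 = 1)"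
proof (intro conjI allI impI)
  fix m :: nat and cv
  assume m: "m \<ge> 2" and dc: "downward_closed cv" and full: "cv {..<m}"
  define h where "h = (m + 1) div 2"
  have st: "set (take h [0..<m]) \<union> set (drop h [0..<m]) = {..<m}"
    by (metis append_take_drop_id set_append set_upt atLeast0LessThan)
  have c1: "cv (set (take h [0..<m]))" using dc full st unfolding downward_closed_def by blast
  have c2: "cv (set (take h [0..<m]) \<union> set (drop h [0..<m]))" using st full by simp
  have L: "length [0..<m] = m" by simp
  have "bsq cv [0..<m] {} {} = ({}, {} \<union> set (take h [0..<m]) \<union> set (drop h [0..<m]), 2)"
    using bsq_unfold[of "[0..<m]" cv "{}" "{}"] m c1 c2 unfolding L Let_def h_def[symmetric]
    by (simp only: Un_empty_left if_True)
  then show "calls cv m = 2"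
    unfolding calls_def binarySequential_def by simp
next
  fix m :: nat and cv
  assume m: "m \<ge> 2"
  show "2 \<le> calls cv m" unfolding calls_def binarySequential_def using bsq_ge2 m by simp
next
  fix m :: nat and cv
  assume m: "m \<ge> 2" and dc: "downward_closed cv" and ns: "\<forall>i<m. \<not> cv {i}"
  have hyp: "\<And>S. S \<noteq> {} \<Longrightarrow> S \<subseteq> {..<m} \<Longrightarrow> \<not> cv S"
  proof -
    fix S assume "S \<noteq> {}" "S \<subseteq> {..<m}"
    then obtain i where "i \<in> S" "i < m" by auto
    then show "\<not> cv S" using dc ns unfolding downward_closed_def by (metis empty_subsetI insert_subset)
  qed
  show "calls cv m = k m"
    unfolding k_W calls_def binarySequential_def
    using bsq_false[of "{..<m}" cv "[0..<m]" "{}" "{}", OF hyp] by (auto simp: atLeast0LessThan)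
next
  fix m :: nat
  assume m: "m \<ge> 2"
  show "k (2 * m) = 2 * k m + 1" unfolding k_W using W_step[of "2*m"] m by simp
  show "k (2 * m + 1) = k (m + 1) + k m + 1" unfolding k_W using W_step[of "2*m+1"] m by simp
next
  fix cv
  show "calls cv 1 = 1" unfolding calls_def binarySequential_def by (subst bsq.simps) auto
qed

end
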